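(* For every integer $k\ge1$ we have $I_k\subseteq B_k$.
   Context: Let $K$ be a field and $A$ the free associative (non-unital) $K$-algebra on free generators $x_0,x_1,x_2,\dots$, with $K$-basis of monomials; $A^1$ is $A$ with unity adjoined. For $n\ge1$, $A(n)$ is the $K$-span of monomials of length $n$, and $A(0)=K$. For a monomial $s=x_{i_1}\cdots x_{i_n}$ write $s[q]=x_{i_q}$. Let $D$ be the derivation of $A$ with $D(x_i)=x_{i+1}$. For $k\ge1$ let $\mathcal X_k=\{x_0,\dots,x_{k-1}\}$; for $n\ge1$ let $W(k,n,0)$ be the set of monomials of length $n$ all of whose letters lie in $\mathcal X_k$, $W(k,n,l+1)=\{D(w):w\in W(k,n,l)\}$, $W(k,n)=\bigcup_{t\ge0}W(k,n,t)$, and let $I_k$ be the two-sided ideal of $A$ generated by $W(k,2\cdot100^{k^2})$. $Z_k$ is the set of all elements $a\in A$ of one of the forms: (1) $a=\kappa s$, $\kappa\in K$, $s$ a monomial of length $100^{k^2}-1$ with $s[3^p\cdot100^{(k-1)^2}]=s[3^q\cdot100^{(k-1)^2}]$ for some $0\le p<q\le k$; (2) $a=\kappa(s_1+s_2)$, $\kappa\in K$, $s_1,s_2$ monomials of length $100^{k^2}-1$, with integers $0\le p<q\le k$ and $l_1>l_2\ge0$ such that $s_1$ has $x_{l_1}$ at position $3^p\cdot100^{(k-1)^2}$ and $x_{l_2}$ at position $3^q\cdot100^{(k-1)^2}$, $s_2$ has $x_{l_2}$ and $x_{l_1}$ at these positions respectively, and $s_1,s_2$ agree at all other positions. Finally $B_k=\sum_{m\ge0}A(m\cdot100^{k^2})\,Z_k\,A^1$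 (the $K$-span of products $uzv$ with $u\in A(m\cdot100^{k^2})$, $m\ge0$, $z\in Z_k$, $v\in A^1$). *)

theory Defs
  imports Main
begin

text \<open>Elements of the free associative algebra with unity adjoined, A^1, over a field K
  on generators x_0, x_1, ... are represented as finitely supported coefficient functions
  on words (nat lists); the word [i1,...,in] is the monomial x_i1 ... x_in and the empty
  word is the unit.  The non-unital algebra A consists of those with zero constant term.\<close>

type_synonym 'k fa = "nat list \<Rightarrow> 'k"

definition fsupp :: "'k::field fa \<Rightarrow> bool" where
  "fsupp f \<longleftrightarrow> finite {w. f w \<noteq> 0}"

definition A1 :: "'k::field fa set" where
  "A1 = {f. fsupp f}"

definition Aalg :: "'k::field fa set" where
  "Aalg = {f. fsupp f \<and> f [] = 0}"

definition mono :: "nat list \<Rightarrow> 'k::field fa" where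
  "mono s = (\<lambda>w. if w = s then 1 else 0)"

definition fadd :: "'k::field fa \<Rightarrow> 'k fa \<Rightarrow> 'k fa" where
  "fadd f g = (\<lambda>w. f w + g w)"

definition fscale :: "'k::field \<Rightarrow> 'k fa \<Rightarrow> 'k fa" where
  "fscale c f = (\<lambda>w. c * f w)"

definition fmult :: "'k::field fa \<Rightarrow> 'k fa \<Rightarrow> 'k fa" where
  "fmult f g = (\<lambda>w. \<Sum>i\<le>length w. f (take i w) * g (drop i w))"

definition Ahom :: "nat \<Rightarrow> 'k::field fa set" where
  "Ahom n = {f. fsupp f \<and> (\<forall>w. f w \<noteq> 0 \<longrightarrow> length w = n)}"

text \<open>The derivation D with D(x_i) = x_(i+1), extended by the Leibniz rule and linearity:
  D(x_i1...x_in) = sum over q of the word with the q-th index increased by one.\<close>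
definition Der :: "'k::field fa \<Rightarrow> 'k fa" where
  "Der f = (\<lambda>w. \<Sum>q\<in>{q. q < length w \<and> w ! q > 0}. f (w[q := w ! q - 1]))"

definition W0 :: "nat \<Rightarrow> nat \<Rightarrow> 'k::field fa set" where
  "W0 k n = {mono s | s. length s = n \<and> (\<forall>i\<in>set s. i < k)}"

definition Wl :: "nat \<Rightarrow> nat \<Rightarrow> nat \<Rightarrow> 'k::field fa set" where
  "Wl k n l = (Der ^^ l) ` W0 k n"

definition Wall :: "nat \<Rightarrow> nat \<Rightarrow> 'k::field fa set" where
  "Wall k n = (\<Union>t. Wl k n t)"

definition is_ideal :: "'k::field fa set \<Rightarrow> bool" where
  "is_ideal J \<longleftrightarrow> J \<subseteq> Aalg \<and> (\<lambda>_. 0) \<in> J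
     \<and> (\<forall>f\<in>J. \<forall>g\<in>J. fadd f g \<in> J)
     \<and> (\<forall>c f. f \<in> J \<longrightarrow> fscale c f \<in> J)
     \<and> (\<forall>a\<in>Aalg. \<forall>f\<in>J. fmult a f \<in> J \<and> fmult f a \<in> J)"

definition ideal_gen :: "'k::field fa set \<Rightarrow> 'k fa set" where
  "ideal_gen S = \<Inter>{J. is_ideal J \<and> S \<subseteq> J}"

definition Ik :: "nat \<Rightarrow> 'k::field fa set" where
  "Ik k = ideal_gen (Wall k (2 * 100 ^ (k\<^sup>2)))"

definition kspan :: "'k::field fa set \<Rightarrow> 'k fa set" where
  "kspan X = \<Inter>{V. (\<lambda>_. 0) \<in> V \<and> (\<forall>f\<in>V. \<forall>g\<in>V. fadd f g \<in> V)
                   \<and> (\<forall>c f. f \<in> V \<longrightarrow> fscale c f \<in> V) \<and> X \<subseteq> V}"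

text \<open>Positions are 1-based in the paper: s[q] = s ! (q - 1).\<close>
definition posk :: "nat \<Rightarrow> nat \<Rightarrow> nat" where
  "posk k p = 3 ^ p * 100 ^ ((k - 1)\<^sup>2)"

definition Zk :: "nat \<Rightarrow> 'k::field fa set" where
  "Zk k =
    {fscale \<kappa> (mono s) | \<kappa> s. length s = 100 ^ (k\<^sup>2) - 1 \<and>
       (\<exists>p q. p < q \<and> q \<le> k \<and> s ! (posk k p - 1) = s ! (posk k q - 1))}
    \<union>
    {fscale \<kappa> (fadd (mono s1) (mono s2)) | \<kappa> s1 s2. length s1 = 100 ^ (k\<^sup>2) - 1 \<and>
       length s2 = 100 ^ (k\<^sup>2) - 1 \<and>
       (\<exists>p q l1 l2. p < q \<and> q \<le> k \<and> l2 < l1 \<and>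
          s1 ! (posk k p - 1) = l1 \<and> s1 ! (posk k q - 1) = l2 \<and>
          s2 ! (posk k p - 1) = l2 \<and> s2 ! (posk k q - 1) = l1 \<and>
          (\<forall>i < length s1. i \<noteq> posk k p - 1 \<and> i \<noteq> posk k q - 1 \<longrightarrow> s1 ! i = s2 ! i))}"

definition Bk :: "nat \<Rightarrow> 'k::field fa set" where
  "Bk k = kspan {fmult (fmult u z) v | u z v m.
                   u \<in> Ahom (m * 100 ^ (k\<^sup>2)) \<and> z \<in> Zk k \<and> v \<in> A1}"

end

theory Submission
  imports Defs
begin


lemma fmult_mono_left:
  "fmult (mono a) g w = (if take (length a) w = a then g (drop (length a) w) else 0)"
proof -
  have "fmult (mono a) g w = (\<Sum>i\<le>length w. if i = length a then (if take (length a) w = a then g (drop (length a) w) else 0) else 0)"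
    unfolding fmult_def mono_def
    by (rule sum.cong) auto
  also have "\<dots> = (if take (length a) w = a then g (drop (length a) w) else 0)"
    by (auto simp: sum.delta)
  finally show ?thesis .
qed

lemma fmult_assoc: "fmult (fmult f g) h = fmult f (fmult g h)"
proof
  fix w :: "nat list"
  let ?n = "length w"
  let ?F = "\<lambda>j l. f (take j w) * g (take l (drop j w)) * h (drop (j+l) w)"
  have "fmult (fmult f g) h w = (\<Sum>i\<le>?n. \<Sum>j\<le>i. ?F j (i - j))"
    unfolding fmult_def
    by (rule sum.cong) (auto simp: sum_distrib_right min_def take_drop intro!: sum.cong)
  also have "\<dots> = (\<Sum>(j,l)\<in>{(j,l). j+l \<le> ?n}. ?F j l)"
    by (rule sum.triangle_reindex_eq[symmetric])
  also have "\<dots> = (\<Sum>j\<le>?n. \<Sum>l\<le>?n - j. ?F j l)"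
  proof -
    have "{(j,l). j+l \<le> ?n} = Sigma {..?n} (\<lambda>j. {..?n - j})" by auto
    then show ?thesis by (simp add: sum.Sigma)
  qed
  also have "\<dots> = fmult f (fmult g h) w"
    unfolding fmult_def
    by (rule sum.cong) (auto simp: sum_distrib_left mult.assoc add.commute intro!: sum.cong)
  finally show "fmult (fmult f g) h w = fmult f (fmult g h) w" .
qed



lemma fmult_fadd_left: "fmult (fadd f g) h = fadd (fmult f h) (fmult g h)"
  unfolding fmult_def fadd_def by (auto simp: distrib_right sum.distrib)
lemma fmult_fadd_right: "fmult h (fadd f g) = fadd (fmult h f) (fmult h g)"
  unfolding fmult_def fadd_def by (auto simp: distrib_left sum.distrib)
lemma fmult_fscale_left: "fmult (fscale c f) h = fscale c (fmult f h)"
  unfolding fmult_def fscale_def by (auto simp: sum_distrib_left mult.assoc)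
lemma fmult_fscale_right: "fmult h (fscale c f) = fscale c (fmult h f)"
  unfolding fmult_def fscale_def by (auto simp: sum_distrib_left mult.assoc mult.left_commute)
lemma fmult_zero_left: "fmult (\<lambda>_. 0) h = (\<lambda>_. 0)"
  unfolding fmult_def by auto
lemma fmult_zero_right: "fmult h (\<lambda>_. 0) = (\<lambda>_. 0)"
  unfolding fmult_def by auto

lemma fmult_mono_mono: "fmult (mono a) (mono b) = mono (a @ b)"
proof
  fix w :: "nat list"
  show "fmult (mono a) (mono b) w = (mono (a @ b) :: 'a fa) w"
  proof -
    have "(take (length a) w = a \<and> drop (length a) w = b) \<longleftrightarrow> w = a @ b"
      by (metis append_eq_conv_conj)
    then show ?thesis unfolding fmult_mono_left by (auto simp: mono_def)
  qed
qed

lemma fmult_mono_Nil: "fmult (mono []) f = f"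
  by (rule ext) (simp add: fmult_mono_left)

lemma fsupp_mono: "fsupp (mono s)"
  unfolding fsupp_def mono_def by auto

lemma fsupp_fmult: assumes "fsupp f" "fsupp g" shows "fsupp (fmult f g)"
proof -
  have "{w. fmult f g w \<noteq> 0} \<subseteq> (\<lambda>(x,y). x @ y) ` ({w. f w \<noteq> 0} \<times> {w. g w \<noteq> 0})"
  proof
    fix w assume "w \<in> {w. fmult f g w \<noteq> 0}"
    then have "(\<Sum>i\<le>length w. f (take i w) * g (drop i w)) \<noteq> 0"
      unfolding fmult_def by simp
    from sum.not_neutral_contains_not_neutral[OF this] obtain i
      where "f (take i w) * g (drop i w) \<noteq> 0" by blast
    then have "f (take i w) \<noteq> 0" "g (drop i w) \<noteq> 0" by auto
    then show "w \<in> (\<lambda>(x,y). x @ y) ` ({w. f w \<noteq> 0} \<times> {w. g w \<noteq> 0})"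
      by (auto intro!: image_eqI[where x="(take i w, drop i w)"])
  qed
  moreover have "finite ((\<lambda>(x,y). x @ y) ` ({w. f w \<noteq> 0} \<times> {w. g w \<noteq> 0}))"
    using assms unfolding fsupp_def by blast
  ultimately show ?thesis unfolding fsupp_def by (rule finite_subset)
qed

lemma fsupp_fadd: "fsupp f \<Longrightarrow> fsupp g \<Longrightarrow> fsupp (fadd f g)"
  unfolding fsupp_def fadd_def
  by (rule finite_subset[of _ "{w. f w \<noteq> 0} \<union> {w. g w \<noteq> 0}"]) auto
lemma fsupp_fscale: "fsupp f \<Longrightarrow> fsupp (fscale c f)"
  unfolding fsupp_def fscale_def
  by (rule finite_subset[of _ "{w. f w \<noteq> 0}"]) auto

lemma Aalg_fmult: assumes "f \<in> Aalg" "g \<in> Aalg" shows "fmult f g \<in> Aalg"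
proof -
  have "fsupp (fmult f g)" using assms fsupp_fmult unfolding Aalg_def by blast
  moreover have "fmult f g [] = 0" using assms unfolding Aalg_def fmult_def by simp
  ultimately show ?thesis unfolding Aalg_def by blast
qed

lemma kspan_base: "x \<in> X \<Longrightarrow> x \<in> kspan X" unfolding kspan_def by auto
lemma kspan_zero: "(\<lambda>_. 0) \<in> kspan X" unfolding kspan_def by auto
lemma kspan_add: "f \<in> kspan X \<Longrightarrow> g \<in> kspan X \<Longrightarrow> fadd f g \<in> kspan X"
  unfolding kspan_def by auto
lemma kspan_scale: "f \<in> kspan X \<Longrightarrow> fscale c f \<in> kspan X"
  unfolding kspan_def by auto
lemma kspan_least: "(\<lambda>_. 0) \<in> V \<Longrightarrow> (\<forall>f\<in>V. \<forall>g\<in>V. fadd f g \<in> V) \<Longrightarrow>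
   (\<forall>c f. f \<in> V \<longrightarrow> fscale c f \<in> V) \<Longrightarrow> X \<subseteq> V \<Longrightarrow> kspan X \<subseteq> V"
  unfolding kspan_def by auto

lemma Bk_add: "f \<in> Bk k \<Longrightarrow> g \<in> Bk k \<Longrightarrow> fadd f g \<in> Bk k"
  unfolding Bk_def by (rule kspan_add)
lemma Bk_scale: "f \<in> Bk k \<Longrightarrow> fscale c f \<in> Bk k"
  unfolding Bk_def by (rule kspan_scale)
lemma Bk_zero: "(\<lambda>_. 0) \<in> Bk k"
  unfolding Bk_def by (rule kspan_zero)

lemma Bk_gen: "u \<in> Ahom (m * 100 ^ (k\<^sup>2)) \<Longrightarrow> z \<in> Zk k \<Longrightarrow> v \<in> A1 \<Longrightarrow> fmult (fmult u z) v \<in> Bk k"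
  unfolding Bk_def by (rule kspan_base) blast

lemma Bk_right: fixes g :: "'a::field fa" assumes "b \<in> Bk k" "g \<in> Aalg" shows "fmult b g \<in> Bk k"
proof -
  let ?X = "{fmult (fmult u z) v | u z v m.
                   u \<in> Ahom (m * 100 ^ (k\<^sup>2)) \<and> (z::'a fa) \<in> Zk k \<and> v \<in> A1}"
  let ?V = "{b::'a fa. fmult b g \<in> Bk k}"
  have "kspan ?X \<subseteq> ?V"
  proof (rule kspan_least)
    show "(\<lambda>_. 0) \<in> ?V" using fmult_zero_left[of g] Bk_zero by simp
    show "\<forall>f\<in>?V. \<forall>g\<in>?V. fadd f g \<in> ?V" using Bk_add[of _ k]
      by (auto simp add: fmult_fadd_left)
    show "\<forall>c f. f \<in> ?V \<longrightarrow> fscale c f \<in> ?V" using Bk_scale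
      by (auto simp add: fmult_fscale_left intro: Bk_scale)
    show "?X \<subseteq> ?V"
    proof
      fix x :: "'a fa" assume "x \<in> ?X"
      then obtain u z v m where x: "x = fmult (fmult u z) v" "u \<in> Ahom (m * 100 ^ (k\<^sup>2))"
        "z \<in> Zk k" "v \<in> A1" by blast
      have "fmult x g = fmult (fmult u z) (fmult v g)" using x by (simp add: fmult_assoc)
      moreover have "fmult v g \<in> A1" using x(4) assms(2) unfolding A1_def Aalg_def
        by (auto simp: fsupp_fmult)
      ultimately show "x \<in> ?V" using x Bk_gen by simp
    qed
  qed
  then show ?thesis using assms(1) unfolding Bk_def by auto
qed

lemma mono_Ahom: "length u = n \<Longrightarrow> mono u \<in> Ahom n"
  unfolding Ahom_def using fsupp_mono[of u] by (auto simp: mono_def)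
lemma mono_A1: "mono u \<in> A1"
  unfolding A1_def by (auto simp: fsupp_mono)

lemma fsupp_induct_Bk:
  assumes "fsupp h" "\<And>b. fmult (mono b) f \<in> Bk k"
  shows "fmult h f \<in> Bk k"
proof -
  have "\<forall>h. {w. h w \<noteq> 0} \<subseteq> S \<longrightarrow> fmult h f \<in> Bk k" if "finite S" for S
    using that
  proof (induction S rule: finite_induct)
    case empty
    then show ?case
    proof (intro allI impI)
      fix h :: "'a fa" assume "{w. h w \<noteq> 0} \<subseteq> {}"
      then have "h = (\<lambda>_. 0)" by auto
      then show "fmult h f \<in> Bk k" by (simp add: fmult_zero_left Bk_zero)
    qed
  next
    case (insert x S)
    show ?case
    proof (intro allI impI)
      fix h :: "'a fa" assume h: "{w. h w \<noteq> 0} \<subseteq> insert x S"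
      let ?h' = "h(x := 0)"
      have eq: "h = fadd (fscale (h x) (mono x)) ?h'"
        by (rule ext) (auto simp: fadd_def fscale_def mono_def)
      have "fmult h f = fadd (fscale (h x) (fmult (mono x) f)) (fmult ?h' f)"
        by (subst eq) (simp only: fmult_fadd_left fmult_fscale_left)
      moreover have "{w. ?h' w \<noteq> 0} \<subseteq> S" using h by auto
      then have "fmult ?h' f \<in> Bk k" using insert.IH by blast
      ultimately show "fmult h f \<in> Bk k"
        using Bk_add Bk_scale assms(2) by metis
    qed
  qed
  then show ?thesis using assms(1) unfolding fsupp_def by blast
qed



definition swp :: "nat \<Rightarrow> nat \<Rightarrow> nat list \<Rightarrow> nat list" where
  "swp P Q x = (if P < length x \<and> Q < length x then x[P := x!Q, Q := x!P] else x)"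

definition tau :: "nat \<Rightarrow> nat \<Rightarrow> nat \<Rightarrow> nat" where
  "tau P Q q = (if q = P then Q else if q = Q then P else q)"

lemma length_swp[simp]: "length (swp P Q x) = length x"
  unfolding swp_def by auto

lemma swp_swp[simp]: "swp P Q (swp P Q x) = x"
  unfolding swp_def by (auto intro!: nth_equalityI simp: nth_list_update)

lemma swp_nth: "P < length x \<Longrightarrow> Q < length x \<Longrightarrow> i < length x \<Longrightarrow> swp P Q x ! i = x ! tau P Q i"
  unfolding swp_def tau_def by (auto simp: nth_list_update)

lemma tau_tau[simp]: "tau P Q (tau P Q q) = q"
  unfolding tau_def by auto

lemma tau_less: "P < n \<Longrightarrow> Q < n \<Longrightarrow> q < n \<Longrightarrow> tau P Q q < n"
  unfolding tau_def by auto

lemma swp_upd: assumes "P < length x" "Q < length x" "q < length x"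
  shows "(swp P Q x)[q := v] = swp P Q (x[tau P Q q := v])"
  using assms unfolding swp_def tau_def
  by (auto intro!: nth_equalityI simp: nth_list_update)

lemma swp_id: "s ! P = s ! Q \<Longrightarrow> swp P Q s = s"
  unfolding swp_def by (metis list_update_id)

lemma Der_swp:
  assumes inv: "\<And>y. f (swp P Q y) = f y"
  shows "Der f (swp P Q x) = Der f x"
proof (cases "P < length x \<and> Q < length x")
  case False
  then have "swp P Q x = x" unfolding swp_def by auto
  then show ?thesis by simp
next
  case True
  let ?n = "length x"
  have "Der f (swp P Q x) = (\<Sum>q\<in>{q. q < ?n \<and> swp P Q x ! q > 0}. f ((swp P Q x)[q := swp P Q x ! q - 1]))"
    unfolding Der_def by simp
  also have "\<dots> = (\<Sum>q\<in>{q. q < ?n \<and> x ! q > 0}. f (x[q := x ! q - 1]))"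
  proof (rule sum.reindex_bij_witness[where i="tau P Q" and j="tau P Q"])
    fix a assume a: "a \<in> {q. q < ?n \<and> swp P Q x ! q > 0}"
    show "tau P Q (tau P Q a) = a" by simp
    show "tau P Q a \<in> {q. q < ?n \<and> x ! q > 0}"
      using a True by (auto simp: swp_nth tau_less)
    show "f (x[tau P Q a := x ! tau P Q a - 1]) = f ((swp P Q x)[a := swp P Q x ! a - 1])"
      using a True by (simp add: swp_upd swp_nth inv)
  next
    fix b assume b: "b \<in> {q. q < ?n \<and> x ! q > 0}"
    show "tau P Q (tau P Q b) = b" by simp
    show "tau P Q b \<in> {q. q < ?n \<and> swp P Q x ! q > 0}"
      using b True by (auto simp: swp_nth tau_less)
  qed
  also have "\<dots> = Der f x" unfolding Der_def by simp
  finally show ?thesis .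
qed

lemma Der_nonzero:
  assumes "Der f x \<noteq> 0"
  obtains q where "q < length x" "x ! q > 0" "f (x[q := x ! q - 1]) \<noteq> 0"
proof -
  from assms have "(\<Sum>q\<in>{q. q < length x \<and> x ! q > 0}. f (x[q := x ! q - 1])) \<noteq> 0"
    unfolding Der_def by simp
  from sum.not_neutral_contains_not_neutral[OF this] that show ?thesis by blast
qed

lemma Der_hom:
  assumes "\<And>y. f y \<noteq> 0 \<Longrightarrow> length y = n" "Der f x \<noteq> 0"
  shows "length x = n"
proof -
  obtain q where "q < length x" "f (x[q := x ! q - 1]) \<noteq> 0" using Der_nonzero[OF assms(2)] by blast
  then show ?thesis using assms(1) by fastforce
qed

lemma Der_fsupp:
  assumes "fsupp f"
  shows "fsupp (Der f)"
proof -
  let ?S = "{w. f w \<noteq> 0}"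
  have "{x. Der f x \<noteq> 0} \<subseteq> (\<Union>v\<in>?S. (\<lambda>q. v[q := v ! q + 1]) ` {..<length v})"
  proof
    fix x assume "x \<in> {x. Der f x \<noteq> 0}"
    then obtain q where q: "q < length x" "x ! q > 0" "f (x[q := x ! q - 1]) \<noteq> 0"
      using Der_nonzero by blast
    let ?v = "x[q := x ! q - 1]"
    have "?v[q := ?v ! q + 1] = x" using q by (auto intro!: nth_equalityI simp: nth_list_update)
    then show "x \<in> (\<Union>v\<in>?S. (\<lambda>q. v[q := v ! q + 1]) ` {..<length v})"
      using q by (auto intro!: bexI[where x="?v"] image_eqI[where x=q])
  qed
  moreover have "finite (\<Union>v\<in>?S. (\<lambda>q. v[q := v ! q + 1]) ` {..<length v})"
    using assms unfolding fsupp_def by auto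
  ultimately show ?thesis unfolding fsupp_def by (rule finite_subset)
qed

lemma Der_pow_props:
  assumes "s ! P = s ! Q"
  shows "fsupp ((Der ^^ t) (mono s) :: 'a::field fa) \<and> (\<forall>y. (Der ^^ t) (mono s) y \<noteq> (0::'a) \<longrightarrow> length y = length s)
     \<and> (\<forall>y. (Der ^^ t) (mono s) (swp P Q y) = ((Der ^^ t) (mono s) y :: 'a))"
proof (induction t)
  case 0
  have "(mono s :: 'a fa) (swp P Q y) = mono s y" for y
  proof -
    have "swp P Q y = s \<longleftrightarrow> y = s" using swp_id[OF assms] by (metis swp_swp)
    then show ?thesis unfolding mono_def by simp
  qed
  then show ?case using fsupp_mono[of s] by (auto simp: mono_def)
next
  case (Suc t)
  let ?g = "(Der ^^ t) (mono s) :: 'a fa"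
  have e: "(Der ^^ Suc t) (mono s) = Der ?g" by simp
  from Suc have h1: "fsupp ?g" and h2: "\<And>y. ?g y \<noteq> 0 \<Longrightarrow> length y = length s"
    and h3: "\<And>y. ?g (swp P Q y) = ?g y" by auto
  have "fsupp (Der ?g)" by (rule Der_fsupp[OF h1])
  moreover have "\<forall>y. Der ?g y \<noteq> 0 \<longrightarrow> length y = length s" using Der_hom[OF h2] by blast
  moreover have "\<forall>y. Der ?g (swp P Q y) = Der ?g y" using Der_swp[of ?g P Q, OF h3] by blast
  ultimately show ?case unfolding e by blast
qed

lemma take_swp: "take r (swp (r+P) (r+Q) x) = take r x"
  unfolding swp_def by (auto simp: take_update_cancel)

lemma drop_swp: "drop r (swp (r+P) (r+Q) x) = swp P Q (drop r x)"
  unfolding swp_def by (auto intro!: nth_equalityI simp: nth_list_update)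

lemma fmult_mono_swp:
  assumes "\<And>y. w (swp P Q y) = w y"
  shows "fmult (mono a) w (swp (length a + P) (length a + Q) x) = fmult (mono a) w x"
  unfolding fmult_mono_left take_swp drop_swp assms ..



lemma posk_bounds:
  assumes "k \<ge> 1" "p < q" "q \<le> k"
  shows "1 \<le> posk k p" "posk k p < posk k q" "posk k q < 100 ^ (k\<^sup>2)"
proof -
  have pos: "(0::nat) < 100 ^ ((k - 1)\<^sup>2)" by simp
  show "1 \<le> posk k p" unfolding posk_def by simp
  have "(3::nat) ^ p < 3 ^ q" using assms(2) by (simp add: power_strict_increasing)
  then show "posk k p < posk k q" unfolding posk_def using pos by simp
  have "(3::nat) ^ q \<le> 3 ^ k" using assms(3) by (simp add: power_increasing)
  also have "\<dots> < 100 ^ k" using assms(1) by (simp add: power_strict_mono)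
  also have "\<dots> \<le> 100 ^ (2 * k - 1)" using assms(1) by (intro power_increasing) auto
  finally have a: "(3::nat) ^ q < 100 ^ (2 * k - 1)" .
  have e: "k\<^sup>2 = (k - 1)\<^sup>2 + (2 * k - 1)" using assms(1)
    by (cases k) (auto simp: power2_eq_square)
  have "posk k q = 3 ^ q * 100 ^ ((k - 1)\<^sup>2)" unfolding posk_def ..
  also have "\<dots> < 100 ^ (2 * k - 1) * 100 ^ ((k - 1)\<^sup>2)" using a pos by simp
  also have "\<dots> = 100 ^ (k\<^sup>2)" unfolding e power_add by simp
  finally show "posk k q < 100 ^ (k\<^sup>2)" .
qed

lemma three_split: "take a y @ take b (drop a y) @ drop (a + b) y = y"
proof -
  have "take b (drop a y) @ drop (b + a) y = drop a y"
    by (metis append_take_drop_id drop_drop)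
  then show ?thesis by (simp add: add.commute)
qed

lemma prod_single:
  "fmult (fmult (mono u) (fscale c (mono s))) (mono v) = (fscale c (mono (u @ s @ v)) :: 'a::field fa)"
  by (simp add: fmult_fscale_right fmult_fscale_left fmult_mono_mono)

lemma prod_pair:
  "fmult (fmult (mono u) (fscale c (fadd (mono s1) (mono s2)))) (mono v)
     = (fscale c (fadd (mono (u @ s1 @ v)) (mono (u @ s2 @ v))) :: 'a::field fa)"
  by (simp add: fmult_fscale_right fmult_fscale_left fmult_fadd_right fmult_fadd_left fmult_mono_mono)

context
  fixes k m L p q :: nat
  assumes k1: "k \<ge> 1" and pq: "p < q" "q \<le> k"
    and Lbig: "m * 100 ^ (k\<^sup>2) + (100 ^ (k\<^sup>2) - 1) \<le> L"
begin

abbreviation "NN \<equiv> (100::nat) ^ (k\<^sup>2)"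
abbreviation "PP \<equiv> m * NN + (posk k p - 1)"
abbreviation "QQ \<equiv> m * NN + (posk k q - 1)"
abbreviation "win y \<equiv> take (NN - 1) (drop (m * NN) y)"

lemma NNpos: "NN \<ge> 1" by simp

lemma pb: "1 \<le> posk k p" "posk k p < posk k q" "posk k q < NN"
  using posk_bounds[OF k1 pq] by auto

lemma PQ_less: "PP < QQ" "QQ < m * NN + (NN - 1)"
  using pb by auto

lemma win_nth: "length y = L \<Longrightarrow> i < NN - 1 \<Longrightarrow> win y ! i = y ! (m * NN + i)"
  using Lbig by (simp add: add.commute)

lemma win_len: "length y = L \<Longrightarrow> length (win y) = NN - 1"
  using Lbig by simp

lemma single_Bk:
  assumes "length y = L" "y ! PP = y ! QQ"
  shows "fscale c (mono y) \<in> (Bk k :: 'a::field fa set)"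
proof -
  have "y = take (m * NN) y @ win y @ drop (m * NN + (NN - 1)) y"
    using three_split by metis
  then have e: "fscale c (mono y) = (fmult (fmult (mono (take (m * NN) y)) (fscale c (mono (win y)))) (mono (drop (m * NN + (NN - 1)) y)) :: 'a fa)"
    by (simp only: prod_single)
  have z: "fscale c (mono (win y)) \<in> (Zk k :: 'a fa set)"
  proof -
    have a1: "win y ! (posk k p - 1) = y ! PP"
      by (rule win_nth[OF assms(1)]) (use pb in simp)
    have a2: "win y ! (posk k q - 1) = y ! QQ"
      by (rule win_nth[OF assms(1)]) (use pb in simp)
    have "win y ! (posk k p - 1) = win y ! (posk k q - 1)"
      unfolding a1 a2 by (rule assms(2))
    then show ?thesis unfolding Zk_def using win_len[OF assms(1)] pq by blast
  qed
  have u: "mono (take (m * NN) y) \<in> (Ahom (m * NN) :: 'a fa set)"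
  proof (rule mono_Ahom)
    have "m * NN \<le> length y" using assms(1) Lbig by linarith
    then show "length (take (m * NN) y) = m * NN" by simp
  qed
  show ?thesis unfolding e by (rule Bk_gen[OF u z mono_A1])
qed

lemma swp_take: "take (m * NN) (swp PP QQ y) = take (m * NN) y"
  unfolding swp_def by auto

lemma swp_drop: "drop (m * NN + (NN - 1)) (swp PP QQ y) = drop (m * NN + (NN - 1)) y"
  using PQ_less unfolding swp_def by auto

lemma pair_Bk:
  assumes "length y = L" "y ! PP > y ! QQ"
  shows "fscale c (fadd (mono y) (mono (swp PP QQ y))) \<in> (Bk k :: 'a::field fa set)"
proof -
  let ?u = "take (m * NN) y" and ?v = "drop (m * NN + (NN - 1)) y" and ?y' = "swp PP QQ y"
  have s1: "y = ?u @ win y @ ?v" using three_split by metis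
  have s2: "?y' = ?u @ win ?y' @ ?v" using three_split[of "m * NN" ?y' "NN - 1"]
    by (simp only: swp_take swp_drop)
  have e: "fscale c (fadd (mono y) (mono ?y')) = (fmult (fmult (mono ?u) (fscale c (fadd (mono (win y)) (mono (win ?y'))))) (mono ?v) :: 'a fa)"
    by (subst s1, subst s2, simp only: prod_pair, simp only: s1[symmetric] s2[symmetric])
  have PQL: "PP < L" "QQ < L" using PQ_less Lbig by auto
  have ly': "length ?y' = L" using assms(1) by simp
  have z: "fscale c (fadd (mono (win y)) (mono (win ?y'))) \<in> (Zk k :: 'a fa set)"
  proof -
    have n1: "win y ! (posk k p - 1) = y ! PP" "win y ! (posk k q - 1) = y ! QQ"
      by (rule win_nth[OF assms(1)], use pb in simp)+
    have n2: "win ?y' ! (posk k p - 1) = y ! QQ" "win ?y' ! (posk k q - 1) = y ! PP"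
      using assms pb PQL by (simp_all add: win_nth[OF ly'] swp_nth tau_def)
    have n3: "\<forall>i < length (win y). i \<noteq> posk k p - 1 \<and> i \<noteq> posk k q - 1 \<longrightarrow> win y ! i = win ?y' ! i"
    proof (intro allI impI)
      fix i assume i: "i < length (win y)" "i \<noteq> posk k p - 1 \<and> i \<noteq> posk k q - 1"
      then have i': "i < NN - 1" using win_len[OF assms(1)] by simp
      have "m * NN + i < L" using i' Lbig by simp
      then show "win y ! i = win ?y' ! i"
        using i i' PQL assms(1) by (simp add: win_nth[OF ly'] win_nth[OF assms(1)] swp_nth tau_def)
    qed
    show ?thesis unfolding Zk_def
      using win_len[OF assms(1)] win_len[OF ly'] pq assms(2) n1 n2 n3 by blast
  qed
  have u: "mono ?u \<in> (Ahom (m * NN) :: 'a fa set)"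
  proof (rule mono_Ahom)
    have "m * NN \<le> length y" using assms(1) Lbig by linarith
    then show "length (take (m * NN) y) = m * NN" by simp
  qed
  show ?thesis unfolding e by (rule Bk_gen[OF u z mono_A1])
qed

end



lemma swp_eq_iff: "swp P Q y = x \<longleftrightarrow> y = swp P Q x"
  by (metis swp_swp)

lemma window_Bk:
  fixes G :: "'a::field fa"
  assumes k1: "k \<ge> 1" and pq: "p < q" "q \<le> k"
    and Lbig: "m * 100 ^ (k\<^sup>2) + (100 ^ (k\<^sup>2) - 1) \<le> L"
    and fs: "fsupp G" and hom: "\<And>x. G x \<noteq> 0 \<Longrightarrow> length x = L"
    and inv: "\<And>x. G (swp (m * 100 ^ (k\<^sup>2) + (posk k p - 1)) (m * 100 ^ (k\<^sup>2) + (posk k q - 1)) x) = G x"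
  shows "G \<in> Bk k"
proof -
  let ?P = "m * 100 ^ (k\<^sup>2) + (posk k p - 1)" and ?Q = "m * 100 ^ (k\<^sup>2) + (posk k q - 1)"
  have "\<forall>G::'a fa. {w. G w \<noteq> 0} \<subseteq> S \<longrightarrow> (\<forall>x. G x \<noteq> 0 \<longrightarrow> length x = L)
          \<longrightarrow> (\<forall>x. G (swp ?P ?Q x) = G x) \<longrightarrow> G \<in> Bk k" if "finite S" for S
    using that
  proof (induction S rule: finite_induct)
    case empty
    show ?case
    proof (intro allI impI)
      fix G :: "'a fa" assume "{w. G w \<noteq> 0} \<subseteq> {}"
      then have "G = (\<lambda>_. 0)" by auto
      then show "G \<in> Bk k" by (simp add: Bk_zero)
    qed
  next
    case (insert x S)
    show ?case
    proof (intro allI impI)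
      fix G :: "'a fa"
      assume sG: "{w. G w \<noteq> 0} \<subseteq> insert x S" and hG: "\<forall>x. G x \<noteq> 0 \<longrightarrow> length x = L"
        and iG: "\<forall>x. G (swp ?P ?Q x) = G x"
      show "G \<in> Bk k"
      proof (cases "G x = 0")
        case True
        then have "{w. G w \<noteq> 0} \<subseteq> S" using sG by auto
        then show ?thesis using insert.IH hG iG by blast
      next
        case False
        then have lx: "length x = L" using hG by blast
        let ?G' = "\<lambda>y. if y = x \<or> y = swp ?P ?Q x then 0 else G y"
        have "{w. ?G' w \<noteq> 0} \<subseteq> S" using sG by auto
        moreover have "\<forall>y. ?G' y \<noteq> 0 \<longrightarrow> length y = L" using hG by auto
        moreover have "\<forall>y. ?G' (swp ?P ?Q y) = ?G' y"
        proof
          fix y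
          have "(swp ?P ?Q y = x \<or> swp ?P ?Q y = swp ?P ?Q x) \<longleftrightarrow> (y = x \<or> y = swp ?P ?Q x)"
            by (auto simp: swp_eq_iff)
          then show "?G' (swp ?P ?Q y) = ?G' y" using iG by simp
        qed
        ultimately have G'B: "?G' \<in> Bk k" using insert.IH[rule_format, of ?G'] by blast
        have gs: "G (swp ?P ?Q x) = G x" using iG by blast
        consider (eq) "x ! ?P = x ! ?Q" | (gt) "x ! ?P > x ! ?Q" | (lt) "x ! ?P < x ! ?Q"
          by linarith
        then show ?thesis
        proof cases
          case eq
          then have sx: "swp ?P ?Q x = x" by (rule swp_id)
          have eqG: "G = fadd ?G' (fscale (G x) (mono x))"
            using sx by (intro ext) (auto simp: fadd_def fscale_def mono_def)
          have "fscale (G x) (mono x) \<in> (Bk k :: 'a fa set)"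
            using single_Bk[OF k1 pq Lbig lx eq] .
          then have "fadd ?G' (fscale (G x) (mono x)) \<in> Bk k"
            by (rule Bk_add[OF G'B])
          then show ?thesis by (simp only: eqG[symmetric])
        next
          case gt
          have PQL: "?P < L" "?Q < L" using PQ_less[OF k1 pq Lbig] Lbig by auto
          have "(swp ?P ?Q x) ! ?P = x ! ?Q" using PQL lx by (simp add: swp_nth tau_def)
          then have sx: "swp ?P ?Q x \<noteq> x" using gt by auto
          have eqG: "G = fadd ?G' (fscale (G x) (fadd (mono x) (mono (swp ?P ?Q x))))"
            using sx gs by (intro ext) (auto simp: fadd_def fscale_def mono_def)
          have "fscale (G x) (fadd (mono x) (mono (swp ?P ?Q x))) \<in> (Bk k :: 'a fa set)"
            using pair_Bk[OF k1 pq Lbig lx gt] .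
          then have "fadd ?G' (fscale (G x) (fadd (mono x) (mono (swp ?P ?Q x)))) \<in> Bk k"
            by (rule Bk_add[OF G'B])
          then show ?thesis by (simp only: eqG[symmetric])
        next
          case lt
          let ?x' = "swp ?P ?Q x"
          have PQL: "?P < L" "?Q < L" using PQ_less[OF k1 pq Lbig] Lbig by auto
          have lx': "length ?x' = L" using lx by simp
          have "?P \<noteq> ?Q" using PQ_less[OF k1 pq Lbig] by linarith
          then have gt': "?x' ! ?P > ?x' ! ?Q" using lt lx PQL by (simp add: swp_nth tau_def)
          have sx: "?x' \<noteq> x" using lt gt' by auto
          have eqG: "G = fadd ?G' (fscale (G x) (fadd (mono ?x') (mono (swp ?P ?Q ?x'))))"
            using sx gs by (intro ext) (auto simp: fadd_def fscale_def mono_def)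
          have "fscale (G x) (fadd (mono ?x') (mono (swp ?P ?Q ?x'))) \<in> (Bk k :: 'a fa set)"
            using pair_Bk[OF k1 pq Lbig lx' gt'] .
          then have "fadd ?G' (fscale (G x) (fadd (mono ?x') (mono (swp ?P ?Q ?x')))) \<in> Bk k"
            by (rule Bk_add[OF G'B])
          then show ?thesis by (simp only: eqG[symmetric])
        qed
      qed
    qed
  qed
  then show ?thesis using fs hom inv unfolding fsupp_def by blast
qed



lemma zero_Aalg: "(\<lambda>_. 0) \<in> Aalg" unfolding Aalg_def fsupp_def by simp

lemma W_in_J:
  fixes w :: "'a::field fa"
  assumes k1: "k \<ge> 1" and w: "w \<in> Wall k (2 * 100 ^ (k\<^sup>2))"
  shows "w \<in> Aalg \<and> (\<forall>a. fmult (mono a) w \<in> Bk k)"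
proof -
  let ?N = "(100::nat) ^ (k\<^sup>2)"
  obtain t s where ws: "w = (Der ^^ t) (mono s)" and ls: "length s = 2 * ?N"
    and lt: "\<forall>i\<in>set s. i < k"
    using w unfolding Wall_def Wl_def W0_def by blast
  have Npos: "?N \<ge> 1" by simp
  have base: "fsupp w" "\<And>y. w y \<noteq> 0 \<Longrightarrow> length y = length s"
    using Der_pow_props[of s 0 0 t] ws by auto
  have "w [] = 0" using base(2)[of "[]"] ls Npos by auto
  then have wA: "w \<in> Aalg" using base unfolding Aalg_def by simp
  have "fmult (mono a) w \<in> Bk k" for a
  proof -
    let ?r = "length a"
    define m where "m = (?r + ?N - 1) div ?N"
    have dm1: "(?r + ?N - 1) mod ?N < ?N" using Npos by simp
    have dm2: "m * ?N + (?r + ?N - 1) mod ?N = ?r + ?N - 1"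
      unfolding m_def by (rule div_mult_mod_eq)
    have m1: "?r \<le> m * ?N" using dm1 dm2 by linarith
    have m2: "m * ?N \<le> ?r + ?N - 1" using dm2 by linarith
    define j where "j = m * ?N - ?r"
    have j: "j \<le> ?N - 1" "?r + j = m * ?N" using m1 m2 unfolding j_def by auto
    define f where "f i = s ! (j + (posk k i - 1))" for i
    have fr: "f ` {0..k} \<subseteq> {0..<k}"
    proof
      fix y assume "y \<in> f ` {0..k}"
      then obtain i where i: "i \<le> k" "y = f i" by auto
      have "posk k i < ?N"
      proof (cases "i = k")
        case True
        then show ?thesis using posk_bounds(3)[OF k1, of 0 k] k1 by simp
      next
        case False
        then have "i < k" using i by simp
        then show ?thesis using posk_bounds(2)[OF k1, of i k] posk_bounds(3)[OF k1, of 0 k] k1 by simp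
      qed
      then have "j + (posk k i - 1) < length s" using j ls by linarith
      then show "y \<in> {0..<k}" using lt i unfolding f_def by (auto simp: nth_mem)
    qed
    have "card (f ` {0..k}) \<le> k" using card_mono[OF _ fr] by simp
    then have "\<not> inj_on f {0..k}" by (intro pigeonhole) simp
    then obtain i1 i2 where i12: "i1 \<le> k" "i2 \<le> k" "i1 \<noteq> i2" "f i1 = f i2"
      unfolding inj_on_def by auto
    define p where "p = min i1 i2"
    define q where "q = max i1 i2"
    have pq: "p < q" "q \<le> k" using i12 unfolding p_def q_def by auto
    have fpq: "f p = f q" using i12 unfolding p_def q_def by (cases "i1 \<le> i2") auto
    let ?P = "j + (posk k p - 1)" and ?Q = "j + (posk k q - 1)"
    have winv: "\<And>y. w (swp ?P ?Q y) = w y"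
      using Der_pow_props[of s ?P ?Q t] fpq ws unfolding f_def by auto
    let ?G = "fmult (mono a) w"
    have Ginv: "?G (swp (?r + ?P) (?r + ?Q) x) = ?G x" for x
      by (rule fmult_mono_swp[of w ?P ?Q, OF winv])
    have e1: "?r + ?P = m * ?N + (posk k p - 1)" "?r + ?Q = m * ?N + (posk k q - 1)"
      using j by auto
    have Ginv': "?G (swp (m * ?N + (posk k p - 1)) (m * ?N + (posk k q - 1)) x) = ?G x" for x
      using Ginv[of x] unfolding e1 .
    have Gfs: "fsupp ?G" by (rule fsupp_fmult[OF fsupp_mono base(1)])
    have Ghom: "length x = ?r + 2 * ?N" if "?G x \<noteq> 0" for x
    proof -
      have "take ?r x = a" "w (drop ?r x) \<noteq> 0" using that unfolding fmult_mono_left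
        by (auto split: if_splits)
      then have "length (drop ?r x) = 2 * ?N" using base(2) ls by metis
      then have "length x - ?r = 2 * ?N" by simp
      then show ?thesis using Npos by linarith
    qed
    have Lb: "m * ?N + (?N - 1) \<le> ?r + 2 * ?N" using m2 by linarith
    show ?thesis by (rule window_Bk[OF k1 pq Lb Gfs Ghom Ginv'])
  qed
  then show ?thesis using wA by blast
qed

lemma Ik_sub:
  fixes k :: nat
  assumes "k \<ge> 1"
  shows "(Ik k :: 'k::field fa set) \<subseteq> Bk k"
proof -
  define J where "J = {f :: 'k fa. f \<in> Aalg \<and> (\<forall>a. fmult (mono a) f \<in> Bk k)}"
  have "is_ideal J"
    unfolding is_ideal_def
  proof (intro conjI ballI allI impI)
    show "J \<subseteq> Aalg" unfolding J_def by auto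
    show "(\<lambda>_. 0) \<in> J" unfolding J_def using zero_Aalg by (simp add: fmult_zero_right Bk_zero)
  next
    fix f g :: "'k fa" assume "f \<in> J" "g \<in> J"
    then have "fsupp f" "fsupp g" "f [] = 0" "g [] = 0" "\<And>a. fmult (mono a) f \<in> Bk k" "\<And>a. fmult (mono a) g \<in> Bk k"
      unfolding J_def Aalg_def by auto
    then show "fadd f g \<in> J" unfolding J_def Aalg_def
      by (auto simp: fmult_fadd_right Bk_add fsupp_fadd) (simp add: fadd_def)
  next
    fix c and f :: "'k fa" assume "f \<in> J"
    then have "fsupp f" "f [] = 0" "\<And>a. fmult (mono a) f \<in> Bk k"
      unfolding J_def Aalg_def by auto
    then show "fscale c f \<in> J" unfolding J_def Aalg_def
      by (auto simp: fmult_fscale_right Bk_scale fsupp_fscale) (simp add: fscale_def)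
  next
    fix a f :: "'k fa" assume a: "a \<in> Aalg" and f: "f \<in> J"
    have fA: "f \<in> Aalg" and fB: "\<And>b. fmult (mono b) f \<in> Bk k" using f unfolding J_def by auto
    show "fmult a f \<in> J" unfolding J_def
    proof (intro CollectI conjI allI)
      show "fmult a f \<in> Aalg" by (rule Aalg_fmult[OF a fA])
      fix b
      have "fsupp (fmult (mono b) a)" using a unfolding Aalg_def by (auto intro: fsupp_fmult fsupp_mono)
      then have "fmult (fmult (mono b) a) f \<in> Bk k" using fsupp_induct_Bk fB by blast
      then show "fmult (mono b) (fmult a f) \<in> Bk k" by (simp add: fmult_assoc)
    qed
    show "fmult f a \<in> J" unfolding J_def
    proof (intro CollectI conjI allI)
      show "fmult f a \<in> Aalg" by (rule Aalg_fmult[OF fA a])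
      fix b
      have "fmult (fmult (mono b) f) a \<in> Bk k" by (rule Bk_right[OF fB a])
      then show "fmult (mono b) (fmult f a) \<in> Bk k" by (simp add: fmult_assoc)
    qed
  qed
  moreover have "Wall k (2 * 100 ^ (k\<^sup>2)) \<subseteq> J"
    using W_in_J[OF assms] unfolding J_def by blast
  ultimately have "Ik k \<subseteq> J" unfolding Ik_def ideal_gen_def by blast
  moreover have "J \<subseteq> Bk k"
  proof
    fix f assume "f \<in> J"
    then have "fmult (mono []) f \<in> Bk k" unfolding J_def by blast
    then show "f \<in> Bk k" by (simp add: fmult_mono_Nil)
  qed
  ultimately show ?thesis by blast
qed


theorem mainTheorem4:
  fixes k :: nat
  assumes "k \<ge> 1"
  shows "(Ik k :: 'k::field fa set) \<subseteq> Bk k"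
  using Ik_sub[OF assms] .

end
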